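(* Let $H$ be a complex Hilbert space and let $f(z)=\sum_{n=0}^{\infty}a_nz^n$ be a power series with complex coefficients, convergent on the open disk $D(0,R)\subset\mathbb{C}$, $R>0$, and let $f_a(z):=\sum_{n=0}^{\infty}|a_n|z^n$. Let $A,B\in B(H)$ commute and satisfy $\|A\|^2<R$, $\|B\|^2<R$. Then both of the following chains of inequalities hold: \[ r\left[f(AB)\right]\leq \frac12 f_a(\|AB\|)+\frac12 f_a\left(\|A\|^{1/2}\|B\|^{1/2}\|AB\|^{1/2}\right) \leq \frac12 f_a(\|AB\|)+\frac12 f_a^{1/2}(\|A\|\|B\|)f_a^{1/2}(\|AB\|), \] and \[ r\left[f(AB)\right]\leq \frac12 f_a(\|AB\|)+\frac12\min\left\{f_a\left(\|A\|\|B^2\|^{1/2}\right),\ f_a\left(\|A^2\|^{1/2}\|B\|\right)\right\} \] \[ \leq \frac12 f_a(\|AB\|)+\frac12\min\left\{f_a^{1/2}(\|A\|^2)f_a^{1/2}(\|B^2\|),\ f_a^{1/2}(\|A^2\|)f_a^{1/2}(\|B\|^2)\right\}. \]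
   Context: $B(H)$ denotes the algebra of bounded linear operators on $H$, $\|\cdot\|$ the operator norm, and $r(T)$ the spectral radius of $T$. For an operator $T$ with $\|T\|<R$, $f(T):=\sum_{n=0}^\infty a_nT^n$. *)

theory Defs
  imports "HOL-Analysis.Analysis"
begin

text \<open>A complex Hilbert space, presented through its realification: a real Hilbert
  space (real inner product, complete) carrying a complex scalar multiplication that
  extends the real one and is norm-homogeneous.  The complex inner product is then
  recovered by polarization.\<close>
class complex_hilbert = real_inner + complete_space +
  fixes cscale :: "complex \<Rightarrow> 'a \<Rightarrow> 'a"
  assumes cscale_of_real: "cscale (complex_of_real r) x = r *\<^sub>R x"
    and cscale_add_left: "cscale (a + b) x = cscale a x + cscale b x"
    and cscale_add_right: "cscale a (x + y) = cscale a x + cscale a y"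
    and cscale_cscale: "cscale a (cscale b x) = cscale (a * b) x"
    and norm_cscale: "norm (cscale a x) = cmod a * norm x"

definition is_BH :: "('a::complex_hilbert \<Rightarrow>\<^sub>L 'a) \<Rightarrow> bool" where
  "is_BH T \<longleftrightarrow> (\<forall>c x. blinfun_apply T (cscale c x) = cscale c (blinfun_apply T x))"

definition cscaleL :: "complex \<Rightarrow> ('a::complex_hilbert \<Rightarrow>\<^sub>L 'a) \<Rightarrow> ('a \<Rightarrow>\<^sub>L 'a)" where
  "cscaleL c T = Blinfun (\<lambda>x. cscale c (blinfun_apply T x))"

definition opow :: "('a::real_normed_vector \<Rightarrow>\<^sub>L 'a) \<Rightarrow> nat \<Rightarrow> ('a \<Rightarrow>\<^sub>L 'a)" where
  "opow T n = ((\<lambda>S. T o\<^sub>L S) ^^ n) id_blinfun"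

definition op_series :: "(nat \<Rightarrow> complex) \<Rightarrow> ('a::complex_hilbert \<Rightarrow>\<^sub>L 'a) \<Rightarrow> ('a \<Rightarrow>\<^sub>L 'a)" where
  "op_series a T = (\<Sum>n. cscaleL (a n) (opow T n))"

definition abs_series :: "(nat \<Rightarrow> complex) \<Rightarrow> real \<Rightarrow> real" where
  "abs_series a t = (\<Sum>n. cmod (a n) * t ^ n)"

definition op_spectrum :: "('a::complex_hilbert \<Rightarrow>\<^sub>L 'a) \<Rightarrow> complex set" where
  "op_spectrum T = {l. \<not> (\<exists>S. is_BH S \<and>
      (\<forall>x. blinfun_apply S (blinfun_apply T x - cscale l x) = x) \<and>
      (\<forall>x. blinfun_apply T (blinfun_apply S x) - cscale l (blinfun_apply S x) = x))}"

text \<open>Spectral radius (with the convention 0 for an empty spectrum, i.e. H = {0}).\<close>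
definition spectral_radius :: "('a::complex_hilbert \<Rightarrow>\<^sub>L 'a) \<Rightarrow> real" where
  "spectral_radius T = (if op_spectrum T = {} then 0 else Sup (cmod ` op_spectrum T))"

end

theory Submission
  imports Defs
begin


lemma bil_Cauchy_product_sums:
  fixes a :: "nat \<Rightarrow> 'a::banach" and b :: "nat \<Rightarrow> 'b::banach"
    and prod :: "'a \<Rightarrow> 'b \<Rightarrow> 'c::real_normed_vector"
  assumes bl: "bounded_bilinear prod"
    and a: "summable (\<lambda>k. norm (a k))"
    and b: "summable (\<lambda>k. norm (b k))"
  shows "(\<lambda>k. \<Sum>i\<le>k. prod (a i) (b (k - i))) sums prod (\<Sum>k. a k) (\<Sum>k. b k)"
proof -
  interpret bounded_bilinear prod by (rule bl)
  obtain K where K: "K > 0" "\<And>x y. norm (prod x y) \<le> norm x * norm y * K"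
    using pos_bounded by blast
  let ?S1 = "\<lambda>n::nat. {..<n} \<times> {..<n}"
  let ?S2 = "\<lambda>n::nat. {(i,j). i + j < n}"
  have S1_mono: "\<And>m n. m \<le> n \<Longrightarrow> ?S1 m \<subseteq> ?S1 n" by auto
  have S2_le_S1: "\<And>n. ?S2 n \<subseteq> ?S1 n" by auto
  have S1_le_S2: "\<And>n. ?S1 (n div 2) \<subseteq> ?S2 n" by auto
  have finite_S1: "\<And>n. finite (?S1 n)" by simp
  with S2_le_S1 have finite_S2: "\<And>n. finite (?S2 n)" by (rule finite_subset)
  let ?g = "\<lambda>(i,j). prod (a i) (b j)"
  let ?f = "\<lambda>(i,j). norm (a i) * norm (b j) * K"
  have f_nonneg: "\<And>x. 0 \<le> ?f x" using K by auto
  then have norm_sum_f: "\<And>A. norm (sum ?f A) = sum ?f A"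
    unfolding real_norm_def
    by (simp only: abs_of_nonneg sum_nonneg [rule_format])
  have sp: "\<And>n. prod (\<Sum>k<n. a k) (\<Sum>k<n. b k) = sum ?g (?S1 n)"
    unfolding sum_left unfolding sum_right by (simp only: sum.cartesian_product)
  have "(\<lambda>n. prod (\<Sum>k<n. a k) (\<Sum>k<n. b k)) \<longlonglongrightarrow> prod (\<Sum>k. a k) (\<Sum>k. b k)"
    by (intro tendsto summable_LIMSEQ summable_norm_cancel [OF a] summable_norm_cancel [OF b])
  then have 1: "(\<lambda>n. sum ?g (?S1 n)) \<longlonglongrightarrow> prod (\<Sum>k. a k) (\<Sum>k. b k)"
    by (simp only: sp)
  have fq: "\<And>n. (\<Sum>k<n. norm (a k)) * (\<Sum>k<n. norm (b k)) * K = sum ?f (?S1 n)"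
    unfolding sum_product unfolding sum_distrib_right by (simp only: sum.cartesian_product)
  have "(\<lambda>n. (\<Sum>k<n. norm (a k)) * (\<Sum>k<n. norm (b k)) * K) \<longlonglongrightarrow> (\<Sum>k. norm (a k)) * (\<Sum>k. norm (b k)) * K"
    using a b by (intro tendsto_mult summable_LIMSEQ tendsto_const)
  then have "(\<lambda>n. sum ?f (?S1 n)) \<longlonglongrightarrow> (\<Sum>k. norm (a k)) * (\<Sum>k. norm (b k)) * K"
    by (simp only: fq)
  then have "convergent (\<lambda>n. sum ?f (?S1 n))"
    by (rule convergentI)
  then have Cauchy: "Cauchy (\<lambda>n. sum ?f (?S1 n))"
    by (rule convergent_Cauchy)
  have "Zfun (\<lambda>n. sum ?f (?S1 n - ?S2 n)) sequentially"
  proof (rule ZfunI, simp only: eventually_sequentially norm_sum_f)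
    fix r :: real
    assume r: "0 < r"
    from CauchyD [OF Cauchy r] obtain N
      where "\<forall>m\<ge>N. \<forall>n\<ge>N. norm (sum ?f (?S1 m) - sum ?f (?S1 n)) < r" ..
    then have "\<And>m n. N \<le> n \<Longrightarrow> n \<le> m \<Longrightarrow> norm (sum ?f (?S1 m - ?S1 n)) < r"
      by (simp only: sum_diff finite_S1 S1_mono)
    then have N: "\<And>m n. N \<le> n \<Longrightarrow> n \<le> m \<Longrightarrow> sum ?f (?S1 m - ?S1 n) < r"
      by (simp only: norm_sum_f)
    show "\<exists>N. \<forall>n\<ge>N. sum ?f (?S1 n - ?S2 n) < r"
    proof (intro exI allI impI)
      fix n
      assume "2 * N \<le> n"
      then have n: "N \<le> n div 2" by simp
      have "sum ?f (?S1 n - ?S2 n) \<le> sum ?f (?S1 n - ?S1 (n div 2))"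
        by (intro sum_mono2 finite_Diff finite_S1 f_nonneg Diff_mono subset_refl S1_le_S2)
      also have "\<dots> < r"
        using n div_le_dividend by (rule N)
      finally show "sum ?f (?S1 n - ?S2 n) < r" .
    qed
  qed
  then have "Zfun (\<lambda>n. sum ?g (?S1 n - ?S2 n)) sequentially"
    apply (rule Zfun_le [rule_format])
    apply (simp only: norm_sum_f)
    apply (rule order_trans [OF norm_sum sum_mono])
    apply (auto simp add: K)
    done
  then have 2: "(\<lambda>n. sum ?g (?S1 n) - sum ?g (?S2 n)) \<longlonglongrightarrow> 0"
    unfolding tendsto_Zfun_iff diff_0_right
    by (simp only: sum_diff finite_S1 S2_le_S1)
  with 1 have "(\<lambda>n. sum ?g (?S2 n)) \<longlonglongrightarrow> prod (\<Sum>k. a k) (\<Sum>k. b k)"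
    by (rule Lim_transform2)
  then show ?thesis
    by (simp only: sums_def sum.triangle_reindex)
qed


lemma bl_cscale: "bounded_linear (cscale c :: 'a::complex_hilbert \<Rightarrow> 'a)"
proof (rule bounded_linear_intro[where K="cmod c"])
  fix x y :: 'a show "cscale c (x + y) = cscale c x + cscale c y" by (rule cscale_add_right)
next
  fix r :: real and x :: 'a
  have "cscale c (r *\<^sub>R x) = cscale c (cscale (complex_of_real r) x)" by (simp add: cscale_of_real)
  also have "\<dots> = cscale (complex_of_real r) (cscale c x)" by (simp add: cscale_cscale mult.commute)
  finally show "cscale c (r *\<^sub>R x) = r *\<^sub>R cscale c x" by (simp add: cscale_of_real)
next
  fix x :: 'a show "norm (cscale c x) \<le> norm x * cmod c" by (simp add: norm_cscale mult.commute)
qed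

lemma cscale_zero_left[simp]: "cscale 0 x = 0"
  using cscale_of_real[of 0 x] by simp

lemma cscale_one[simp]: "cscale 1 x = x"
  using cscale_of_real[of 1 x] by simp

lemma cscale_commute: "cscale c (cscale d x) = cscale d (cscale c x)"
  by (simp add: cscale_cscale mult.commute)

lemma cscaleL_apply[simp]: "blinfun_apply (cscaleL c T) x = cscale c (blinfun_apply T x)"
proof -
  have "bounded_linear (\<lambda>x. cscale c (blinfun_apply T x))"
    by (rule bounded_linear_compose[OF bl_cscale blinfun.bounded_linear_right])
  then show ?thesis unfolding cscaleL_def by (simp add: bounded_linear_Blinfun_apply)
qed

lemma norm_cscaleL: "norm (cscaleL c T) \<le> cmod c * norm T"
  by (rule norm_blinfun_bound) (auto simp: norm_cscale mult.assoc intro!: mult_left_mono norm_blinfun)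

lemma cscaleL_add: "cscaleL (c + d) T = cscaleL c T + cscaleL d T"
  by (rule blinfun_eqI) (simp add: cscale_add_left blinfun.add_left)

lemma cscaleL_zero: "cscaleL 0 T = 0"
  by (rule blinfun_eqI) simp

lemma cscaleL_sum: "cscaleL (\<Sum>i\<in>I. c i) T = (\<Sum>i\<in>I. cscaleL (c i) T)"
  by (induction I rule: infinite_finite_induct) (auto simp: cscaleL_zero cscaleL_add)

lemma cscaleL_one: "cscaleL 1 T = T"
  by (rule blinfun_eqI) simp

lemma compose_assoc: "(X o\<^sub>L Y) o\<^sub>L Z = X o\<^sub>L (Y o\<^sub>L Z)"
  by (rule blinfun_eqI) simp

lemma compose_id_left[simp]: "id_blinfun o\<^sub>L X = X"
  by (rule blinfun_eqI) simp

lemma compose_id_right[simp]: "X o\<^sub>L id_blinfun = X"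
  by (rule blinfun_eqI) simp

lemma is_BH_compose: "is_BH X \<Longrightarrow> is_BH Y \<Longrightarrow> is_BH (X o\<^sub>L Y)"
  by (simp add: is_BH_def)

lemma is_BH_id: "is_BH id_blinfun"
  by (simp add: is_BH_def)

lemma is_BH_cscaleL: "is_BH X \<Longrightarrow> is_BH (cscaleL c X)"
  by (simp add: is_BH_def cscale_commute)

lemma cscaleL_compose: "is_BH X \<Longrightarrow> cscaleL c X o\<^sub>L cscaleL d Y = cscaleL (c * d) (X o\<^sub>L Y)"
  by (rule blinfun_eqI) (simp add: is_BH_def cscale_cscale)

lemma opow_0[simp]: "opow T 0 = id_blinfun"
  by (simp add: opow_def)

lemma opow_Suc: "opow T (Suc n) = T o\<^sub>L opow T n"
  by (simp add: opow_def)

lemma is_BH_opow: "is_BH T \<Longrightarrow> is_BH (opow T n)"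
  by (induction n) (auto simp: opow_Suc is_BH_id is_BH_compose)

lemma norm_opow: "norm (opow T n) \<le> norm T ^ n"
proof (induction n)
  case 0 then show ?case by (simp add: norm_blinfun_id_le)
next
  case (Suc n)
  have "norm (opow T (Suc n)) \<le> norm T * norm (opow T n)"
    unfolding opow_Suc by (rule norm_blinfun_compose)
  also have "\<dots> \<le> norm T * norm T ^ n" by (intro mult_left_mono Suc) auto
  finally show ?case by simp
qed

lemma opow_add: "opow T (m + n) = opow T m o\<^sub>L opow T n"
  by (induction m) (simp_all add: opow_Suc compose_assoc)

lemma opow_double: "opow T (2 * m) = opow (T o\<^sub>L T) m"
  by (induction m) (simp_all add: opow_Suc compose_assoc opow_add[of T 2 "2*m" for m, simplified] numeral_2_eq_2)

lemma commute_opow: "A o\<^sub>L B = B o\<^sub>L A \<Longrightarrow> A o\<^sub>L opow B n = opow B n o\<^sub>L A"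
proof (induction n)
  case (Suc n)
  have "A o\<^sub>L opow B (Suc n) = (A o\<^sub>L B) o\<^sub>L opow B n" by (simp add: opow_Suc compose_assoc)
  also have "\<dots> = B o\<^sub>L (A o\<^sub>L opow B n)" using Suc.prems by (simp add: compose_assoc)
  also have "\<dots> = opow B (Suc n) o\<^sub>L A" using Suc by (simp add: opow_Suc compose_assoc)
  finally show ?case .
qed simp

lemma opow_prod: "A o\<^sub>L B = B o\<^sub>L A \<Longrightarrow> opow (A o\<^sub>L B) n = opow A n o\<^sub>L opow B n"
proof (induction n)
  case (Suc n)
  have c: "B o\<^sub>L opow A n = opow A n o\<^sub>L B" using commute_opow[OF Suc.prems[symmetric], of n] .
  have "opow (A o\<^sub>L B) (Suc n) = (A o\<^sub>L B) o\<^sub>L (opow A n o\<^sub>L opow B n)"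
    using Suc by (simp only: opow_Suc)
  also have "\<dots> = A o\<^sub>L ((B o\<^sub>L opow A n) o\<^sub>L opow B n)" by (simp only: compose_assoc)
  also have "\<dots> = A o\<^sub>L ((opow A n o\<^sub>L B) o\<^sub>L opow B n)" by (simp only: c)
  also have "\<dots> = opow A (Suc n) o\<^sub>L opow B (Suc n)" by (simp only: compose_assoc opow_Suc)
  finally show ?case .
qed simp


lemma fa_summable:
  fixes a :: "nat \<Rightarrow> complex"
  assumes conv: "\<And>z. cmod z < R \<Longrightarrow> summable (\<lambda>n. a n * z ^ n)"
    and t: "0 \<le> t" "t < R"
  shows "summable (\<lambda>n. cmod (a n) * t ^ n)"
proof -
  define t' where "t' = (t + R) / 2"
  have tp: "0 \<le> t'" "t < t'" "t' < R" using t by (auto simp: t'_def)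
  have "summable (\<lambda>n. a n * complex_of_real t' ^ n)"
    by (rule conv) (use tp in simp)
  then have "summable (\<lambda>n. norm (a n * complex_of_real t ^ n))"
    by (rule powser_insidea) (use tp t in simp)
  then show ?thesis using t by (simp add: norm_mult norm_power)
qed

lemma fa_nonneg:
  assumes conv: "\<And>z. cmod z < R \<Longrightarrow> summable (\<lambda>n. a n * z ^ n)"
    and t: "0 \<le> t" "t < R"
  shows "0 \<le> abs_series a t"
  unfolding abs_series_def using t by (intro suminf_nonneg fa_summable[OF conv t]) auto

lemma fa_mono:
  assumes conv: "\<And>z. cmod z < R \<Longrightarrow> summable (\<lambda>n. a n * z ^ n)"
    and st: "0 \<le> s" "s \<le> t" "t < R"
  shows "abs_series a s \<le> abs_series a t"
  unfolding abs_series_def using st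
  by (intro suminf_le fa_summable[OF conv]) (auto intro!: mult_left_mono power_mono)

lemma fa_CS:
  assumes conv: "\<And>z. cmod z < R \<Longrightarrow> summable (\<lambda>n. a n * z ^ n)"
    and xy: "0 \<le> x" "x < R" "0 \<le> y" "y < R"
  shows "abs_series a (sqrt (x * y)) \<le> sqrt (abs_series a x) * sqrt (abs_series a y)"
proof -
  let ?P = "abs_series a x" and ?Q = "abs_series a y"
  have sx: "summable (\<lambda>n. cmod (a n) * x ^ n)" by (rule fa_summable[OF conv]) (use xy in auto)
  have sy: "summable (\<lambda>n. cmod (a n) * y ^ n)" by (rule fa_summable[OF conv]) (use xy in auto)
  have sxy0: "0 \<le> sqrt (x * y)" using xy by simp
  have "sqrt (x * y) \<le> max x y"
  proof -
    have "x * y \<le> max x y * max x y" using xy by (intro mult_mono) auto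
    then have "sqrt (x * y) \<le> sqrt (max x y * max x y)" by (rule real_sqrt_le_mono)
    also have "\<dots> = max x y" using xy by (simp add: real_sqrt_mult_self max_def)
    finally show ?thesis .
  qed
  then have sxyR: "sqrt (x * y) < R" using xy by auto
  have sxy: "summable (\<lambda>n. cmod (a n) * sqrt (x * y) ^ n)"
    by (rule fa_summable[OF conv sxy0 sxyR])
  show ?thesis unfolding abs_series_def[of a "sqrt (x * y)"]
  proof (rule suminf_le_const[OF sxy])
    fix N
    define u where "u n = sqrt (cmod (a n) * x ^ n)" for n
    define v where "v n = sqrt (cmod (a n) * y ^ n)" for n
    have uv: "cmod (a n) * sqrt (x * y) ^ n = u n * v n" for n
    proof -
      have "u n * v n = sqrt (cmod (a n) * x ^ n * (cmod (a n) * y ^ n))"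
        unfolding u_def v_def by (simp add: real_sqrt_mult)
      also have "\<dots> = sqrt ((cmod (a n))^2 * (x * y) ^ n)"
        by (simp add: power2_eq_square power_mult_distrib algebra_simps)
      also have "\<dots> = cmod (a n) * sqrt (x * y) ^ n"
        by (simp add: real_sqrt_mult real_sqrt_power)
      finally show ?thesis by simp
    qed
    have u2: "(u n)^2 = cmod (a n) * x ^ n" for n unfolding u_def using xy by simp
    have v2: "(v n)^2 = cmod (a n) * y ^ n" for n unfolding v_def using xy by simp
    have "(\<Sum>n<N. u n * v n)^2 \<le> (\<Sum>n<N. (u n)^2) * (\<Sum>n<N. (v n)^2)"
      by (rule Cauchy_Schwarz_ineq_sum)
    also have "\<dots> \<le> ?P * ?Q"
    proof (rule mult_mono)
      show "(\<Sum>n<N. (u n)^2) \<le> ?P" unfolding u2 abs_series_def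
        using xy by (intro sum_le_suminf sx) auto
      show "(\<Sum>n<N. (v n)^2) \<le> ?Q" unfolding v2 abs_series_def
        using xy by (intro sum_le_suminf sy) auto
      show "0 \<le> ?P" by (rule fa_nonneg[OF conv]) (use xy in auto)
      show "0 \<le> (\<Sum>n<N. (v n)^2)" by (intro sum_nonneg) auto
    qed
    finally have "(\<Sum>n<N. u n * v n)^2 \<le> ?P * ?Q" .
    then have "\<bar>\<Sum>n<N. u n * v n\<bar>^2 \<le> ?P * ?Q" by simp
    then have "\<bar>\<Sum>n<N. u n * v n\<bar> \<le> sqrt (?P * ?Q)" by (rule real_le_rsqrt)
    then have "(\<Sum>n<N. u n * v n) \<le> sqrt (?P * ?Q)" by linarith
    have "(\<Sum>n<N. cmod (a n) * sqrt (x * y) ^ n) = (\<Sum>n<N. u n * v n)" by (simp only: uv)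
    also have "\<dots> \<le> sqrt (?P * ?Q)" by fact
    also have "\<dots> = sqrt ?P * sqrt ?Q" by (rule real_sqrt_mult)
    finally show "(\<Sum>n<N. cmod (a n) * sqrt (x * y) ^ n) \<le> sqrt ?P * sqrt ?Q" .
  qed
qed

lemma fa_isCont:
  assumes conv: "\<And>z. cmod z < R \<Longrightarrow> summable (\<lambda>n. a n * z ^ n)"
    and t: "0 \<le> t" "t < R"
  shows "isCont (abs_series a) t"
proof -
  define K where "K = (t + R) / 2"
  have "summable (\<lambda>n. cmod (a n) * K ^ n)"
    by (rule fa_summable[OF conv]) (use t in \<open>auto simp: K_def\<close>)
  then have "isCont (\<lambda>x. \<Sum>n. cmod (a n) * x ^ n) t"
    by (rule isCont_powser) (use t in \<open>auto simp: K_def\<close>)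
  moreover have "abs_series a = (\<lambda>x. \<Sum>n. cmod (a n) * x ^ n)"
    by (rule ext) (simp add: abs_series_def)
  ultimately show ?thesis by simp
qed


instance complex_hilbert \<subseteq> banach ..

lemma apply_suminf: "summable X \<Longrightarrow> blinfun_apply (suminf X) x = (\<Sum>n. blinfun_apply (X n) x)"
  using bounded_linear.suminf[OF blinfun.bounded_linear_left, of X x] by simp

lemma apply_summable: "summable X \<Longrightarrow> summable (\<lambda>n. blinfun_apply (X n) x)"
  using bounded_linear.summable[OF blinfun.bounded_linear_left, of X x] by simp

lemma is_BH_suminf:
  fixes X :: "nat \<Rightarrow> 'a::complex_hilbert \<Rightarrow>\<^sub>L 'a"
  assumes "summable X" "\<And>n. is_BH (X n)"
  shows "is_BH (suminf X)"
  unfolding is_BH_def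
proof (intro allI)
  fix c x
  have "blinfun_apply (suminf X) (cscale c x) = (\<Sum>n. cscale c (blinfun_apply (X n) x))"
    using assms by (simp add: apply_suminf is_BH_def)
  also have "\<dots> = cscale c (\<Sum>n. blinfun_apply (X n) x)"
    using bounded_linear.suminf[OF bl_cscale apply_summable[OF assms(1)]] by simp
  also have "\<dots> = cscale c (blinfun_apply (suminf X) x)" using assms by (simp add: apply_suminf)
  finally show "blinfun_apply (suminf X) (cscale c x) = cscale c (blinfun_apply (suminf X) x)" .
qed

lemma cscale_zero_right[simp]: "cscale c 0 = 0"
  using cscale_add_right[of c 0 0] by simp

lemma cscale_minus: "cscale c (- x) = - cscale c x"
  using cscale_add_right[of c x "-x"] by (simp add: eq_neg_iff_add_eq_0 add.commute)

lemma is_BH_uminus: "is_BH X \<Longrightarrow> is_BH (- X)"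
  by (simp add: is_BH_def blinfun.minus_left cscale_minus)

lemma coef_summable:
  fixes T :: "'a::complex_hilbert \<Rightarrow>\<^sub>L 'a"
  assumes C: "0 \<le> C" and bound: "\<And>k. norm (opow T k) \<le> C * s ^ k" and s: "0 \<le> s"
    and sc: "summable (\<lambda>k. cmod (c k) * s ^ k)"
  shows "summable (\<lambda>k. norm (cscaleL (c k) (opow T k)))"
proof (rule summable_comparison_test'[where g="\<lambda>k. C * (cmod (c k) * s ^ k)" and N=0])
  show "summable (\<lambda>k. C * (cmod (c k) * s ^ k))" by (rule summable_mult[OF sc])
  fix k
  have "norm (cscaleL (c k) (opow T k)) \<le> cmod (c k) * norm (opow T k)" by (rule norm_cscaleL)
  also have "\<dots> \<le> cmod (c k) * (C * s ^ k)" by (intro mult_left_mono bound) auto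
  finally show "norm (norm (cscaleL (c k) (opow T k))) \<le> C * (cmod (c k) * s ^ k)"
    by (simp add: algebra_simps)
qed

lemma coef_norm_bound:
  fixes T :: "'a::complex_hilbert \<Rightarrow>\<^sub>L 'a"
  assumes C: "0 \<le> C" and bound: "\<And>k. norm (opow T k) \<le> C * s ^ k" and s: "0 \<le> s"
    and sc: "summable (\<lambda>k. cmod (c k) * s ^ k)"
  shows "norm (\<Sum>k. cscaleL (c k) (opow T k)) \<le> C * (\<Sum>k. cmod (c k) * s ^ k)"
proof -
  have ns: "summable (\<lambda>k. norm (cscaleL (c k) (opow T k)))" by (rule coef_summable[OF C bound s sc])
  have "norm (\<Sum>k. cscaleL (c k) (opow T k)) \<le> (\<Sum>k. norm (cscaleL (c k) (opow T k)))"
    by (rule summable_norm[OF ns])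
  also have "\<dots> \<le> (\<Sum>k. C * (cmod (c k) * s ^ k))"
  proof (rule suminf_le[OF _ ns summable_mult[OF sc]])
    fix k
    have "norm (cscaleL (c k) (opow T k)) \<le> cmod (c k) * norm (opow T k)" by (rule norm_cscaleL)
    also have "\<dots> \<le> cmod (c k) * (C * s ^ k)" by (intro mult_left_mono bound) auto
    finally show "norm (cscaleL (c k) (opow T k)) \<le> C * (cmod (c k) * s ^ k)"
      by (simp add: algebra_simps)
  qed
  also have "\<dots> = C * (\<Sum>k. cmod (c k) * s ^ k)" by (rule suminf_mult[OF sc])
  finally show ?thesis .
qed


lemma opow_series_inv:
  fixes T :: "'a::complex_hilbert \<Rightarrow>\<^sub>L 'a" and a :: "nat \<Rightarrow> complex"
  assumes conv: "\<And>z. cmod z < R \<Longrightarrow> summable (\<lambda>n. a n * z ^ n)"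
    and BH: "is_BH T" and s: "0 \<le> s" "s < R" and C: "0 \<le> C"
    and bound: "\<And>k. norm (opow T k) \<le> C * s ^ k"
  shows "\<exists>c. (\<lambda>k. cscaleL (c k) (opow T k)) sums opow (op_series a T) n
           \<and> summable (\<lambda>k. cmod (c k) * s ^ k)
           \<and> (\<Sum>k. cmod (c k) * s ^ k) \<le> abs_series a s ^ n"
proof (induction n)
  case 0
  let ?c = "\<lambda>k::nat. if k = 0 then (1::complex) else 0"
  have e1: "(\<lambda>k. cscaleL (?c k) (opow T k)) = (\<lambda>k. if k = 0 then opow T k else 0)"
    by (auto simp: cscaleL_one cscaleL_zero)
  have e2: "(\<lambda>k. cmod (?c k) * s ^ k) = (\<lambda>k. if k = 0 then 1 else 0)"
    by auto
  have "(\<lambda>k::nat. if k = 0 then (1::real) else 0) sums 1"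
    using sums_single[of 0 "\<lambda>_. 1::real"] by simp
  moreover have "(\<lambda>k. if k = 0 then opow T k else 0) sums opow (op_series a T) 0"
    using sums_single[of 0 "opow T"] by simp
  ultimately show ?case
    by (intro exI[of _ ?c]) (auto simp only: e1 e2 sums_iff power_0 intro: order_refl)
next
  case (Suc n)
  let ?F = "op_series a T" and ?M = "abs_series a s"
  from Suc obtain c where c: "(\<lambda>k. cscaleL (c k) (opow T k)) sums opow ?F n"
    "summable (\<lambda>k. cmod (c k) * s ^ k)" "(\<Sum>k. cmod (c k) * s ^ k) \<le> ?M ^ n"
    by blast
  define X where "X k = cscaleL (a k) (opow T k)" for k
  define Y where "Y k = cscaleL (c k) (opow T k)" for k
  define d where "d m = (\<Sum>i\<le>m. a i * c (m - i))" for m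
  have sa: "summable (\<lambda>k. cmod (a k) * s ^ k)" by (rule fa_summable[OF conv s])
  have M0: "0 \<le> ?M" by (rule fa_nonneg[OF conv s])
  have nX: "summable (\<lambda>k. norm (X k))" unfolding X_def by (rule coef_summable[OF C bound s(1) sa])
  have nY: "summable (\<lambda>k. norm (Y k))" unfolding Y_def by (rule coef_summable[OF C bound s(1) c(2)])
  have sX: "suminf X = ?F" by (simp add: op_series_def X_def[abs_def])
  have sY: "suminf Y = opow ?F n" using c(1) by (simp add: sums_iff Y_def[abs_def])
  have cp: "(\<lambda>m. \<Sum>i\<le>m. X i o\<^sub>L Y (m - i)) sums (?F o\<^sub>L opow ?F n)"
    using bil_Cauchy_product_sums[OF bounded_bilinear_blinfun_compose nX nY] sX sY by simp
  have trm: "(\<Sum>i\<le>m. X i o\<^sub>L Y (m - i)) = cscaleL (d m) (opow T m)" for m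
  proof -
    have "X i o\<^sub>L Y (m - i) = cscaleL (a i * c (m - i)) (opow T m)" if "i \<le> m" for i
    proof -
      have "X i o\<^sub>L Y (m - i) = cscaleL (a i * c (m - i)) (opow T i o\<^sub>L opow T (m - i))"
        unfolding X_def Y_def by (rule cscaleL_compose[OF is_BH_opow[OF BH]])
      also have "opow T i o\<^sub>L opow T (m - i) = opow T m"
        using opow_add[of T i "m - i"] that by simp
      finally show ?thesis .
    qed
    then have "(\<Sum>i\<le>m. X i o\<^sub>L Y (m - i)) = (\<Sum>i\<le>m. cscaleL (a i * c (m - i)) (opow T m))"
      by (intro sum.cong) auto
    also have "\<dots> = cscaleL (d m) (opow T m)" by (simp add: d_def cscaleL_sum)
    finally show ?thesis .
  qed
  have part1: "(\<lambda>m. cscaleL (d m) (opow T m)) sums opow ?F (Suc n)"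
    using cp by (simp add: trm opow_Suc)
  define w where "w m = (\<Sum>i\<le>m. (cmod (a i) * s ^ i) * (cmod (c (m - i)) * s ^ (m - i)))" for m
  have ws: "w sums (?M * (\<Sum>k. cmod (c k) * s ^ k))"
  proof -
    have "summable (\<lambda>k. norm (cmod (a k) * s ^ k))" using sa s by simp
    moreover have "summable (\<lambda>k. norm (cmod (c k) * s ^ k))" using c(2) s by simp
    ultimately show ?thesis unfolding w_def abs_series_def by (rule Cauchy_product_sums)
  qed
  have le: "cmod (d m) * s ^ m \<le> w m" for m
  proof -
    have "cmod (d m) \<le> (\<Sum>i\<le>m. cmod (a i) * cmod (c (m - i)))"
      unfolding d_def by (rule order_trans[OF norm_sum]) (simp add: norm_mult)
    then have "cmod (d m) * s ^ m \<le> (\<Sum>i\<le>m. cmod (a i) * cmod (c (m - i))) * s ^ m"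
      using s by (intro mult_right_mono) auto
    also have "\<dots> = w m"
      unfolding w_def sum_distrib_right
    proof (intro sum.cong refl)
      fix i assume "i \<in> {..m}"
      then have "s ^ m = s ^ i * s ^ (m - i)" by (simp add: power_add[symmetric])
      then show "cmod (a i) * cmod (c (m - i)) * s ^ m = cmod (a i) * s ^ i * (cmod (c (m - i)) * s ^ (m - i))"
        by (simp add: algebra_simps)
    qed
    finally show ?thesis .
  qed
  have sd: "summable (\<lambda>m. cmod (d m) * s ^ m)"
    by (rule summable_comparison_test'[where g=w and N=0]) (use ws le s in \<open>auto simp: sums_iff\<close>)
  have "(\<Sum>m. cmod (d m) * s ^ m) \<le> suminf w"
    by (rule suminf_le[OF le sd]) (use ws in \<open>simp add: sums_iff\<close>)
  also have "\<dots> = ?M * (\<Sum>k. cmod (c k) * s ^ k)" using ws by (simp add: sums_iff)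
  also have "\<dots> \<le> ?M * ?M ^ n" by (rule mult_left_mono[OF c(3) M0])
  finally have "(\<Sum>m. cmod (d m) * s ^ m) \<le> ?M ^ Suc n" by simp
  with part1 sd show ?case by blast
qed


lemma cscale_diff: "cscale c (x - y) = cscale c x - cscale c y"
  using cscale_add_right[of c x "- y"] by (simp add: cscale_minus)

lemma spec_bound:
  fixes T :: "'a::complex_hilbert \<Rightarrow>\<^sub>L 'a" and a :: "nat \<Rightarrow> complex"
  assumes conv: "\<And>z. cmod z < R \<Longrightarrow> summable (\<lambda>n. a n * z ^ n)"
    and BH: "is_BH T" and s: "0 \<le> s" "s < R" and C: "0 \<le> C"
    and bound: "\<And>k. norm (opow T k) \<le> C * s ^ k"
    and l: "l \<in> op_spectrum (op_series a T)"
  shows "cmod l \<le> abs_series a s"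
proof (rule ccontr)
  let ?F = "op_series a T" and ?M = "abs_series a s"
  assume "\<not> cmod l \<le> ?M"
  then have lM: "?M < cmod l" by simp
  have M0: "0 \<le> ?M" by (rule fa_nonneg[OF conv s])
  have Fn: "norm (opow ?F n) \<le> C * ?M ^ n" for n
  proof -
    obtain c where c: "(\<lambda>k. cscaleL (c k) (opow T k)) sums opow ?F n"
      "summable (\<lambda>k. cmod (c k) * s ^ k)" "(\<Sum>k. cmod (c k) * s ^ k) \<le> ?M ^ n"
      using opow_series_inv[OF conv BH s C bound] by blast
    have "norm (opow ?F n) = norm (\<Sum>k. cscaleL (c k) (opow T k))" using c(1) by (simp add: sums_iff)
    also have "\<dots> \<le> C * (\<Sum>k. cmod (c k) * s ^ k)" by (rule coef_norm_bound[OF C bound s(1) c(2)])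
    also have "\<dots> \<le> C * ?M ^ n" by (rule mult_left_mono[OF c(3) C])
    finally show ?thesis .
  qed
  have BHF: "is_BH ?F"
  proof -
    have "summable (\<lambda>k. norm (cscaleL (a k) (opow T k)))"
      by (rule coef_summable[OF C bound s(1) fa_summable[OF conv s]])
    then have "summable (\<lambda>k. cscaleL (a k) (opow T k))" by (rule summable_norm_cancel)
    then show ?thesis unfolding op_series_def
      by (rule is_BH_suminf) (intro is_BH_cscaleL is_BH_opow BH)
  qed
  have BHFn: "is_BH (opow ?F n)" for n by (rule is_BH_opow[OF BHF])
  have l0: "l \<noteq> 0" using lM M0 by auto
  define \<mu> where "\<mu> = inverse l"
  have \<mu>l: "\<mu> ^ Suc n * l = \<mu> ^ n" "l * \<mu> ^ Suc n = \<mu> ^ n"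
     "\<mu> * \<mu> ^ n * l = \<mu> ^ n" "l * (\<mu> * \<mu> ^ n) = \<mu> ^ n" for n
    using l0 by (simp_all add: \<mu>_def field_simps)
  define q where "q = cmod \<mu> * ?M"
  have cmu: "cmod \<mu> = 1 / cmod l" by (simp add: \<mu>_def norm_inverse divide_inverse)
  have lpos: "0 < cmod l" using l0 by simp
  have q: "0 \<le> q" "q < 1" using lM M0 lpos by (auto simp: q_def cmu field_simps)
  define Z where "Z n = cscaleL (\<mu> ^ Suc n) (opow ?F n)" for n
  have nZ: "norm (Z n) \<le> cmod \<mu> * C * q ^ n" for n
  proof -
    have "norm (Z n) \<le> cmod (\<mu> ^ Suc n) * norm (opow ?F n)" unfolding Z_def by (rule norm_cscaleL)
    also have "\<dots> \<le> cmod (\<mu> ^ Suc n) * (C * ?M ^ n)" by (intro mult_left_mono Fn) auto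
    also have "\<dots> = cmod \<mu> * C * q ^ n" by (simp add: q_def norm_mult norm_power power_mult_distrib)
    finally show ?thesis .
  qed
  have sZ: "summable Z"
  proof (rule summable_comparison_test'[where g="\<lambda>n. cmod \<mu> * C * q ^ n" and N=0])
    show "summable (\<lambda>n. cmod \<mu> * C * q ^ n)" by (intro summable_mult summable_geometric) (use q in auto)
  qed (rule nZ)
  define S where "S = - suminf Z"
  have BHS: "is_BH S" unfolding S_def
    by (intro is_BH_uminus is_BH_suminf[OF sZ]) (simp add: Z_def is_BH_cscaleL BHFn)
  have Sapp: "blinfun_apply S y = - (\<Sum>n. blinfun_apply (Z n) y)" for y
    by (simp add: S_def blinfun.minus_left apply_suminf[OF sZ])
  define u where "u x n = cscale (\<mu> ^ n) (blinfun_apply (opow ?F n) x)" for x n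
  have tele: "(\<lambda>n. u x (Suc n) - u x n) sums (- x)" for x
  proof -
    have lim0: "(\<lambda>n. C * norm x * q ^ n) \<longlonglongrightarrow> 0"
      by (intro tendsto_mult_right_zero LIMSEQ_power_zero) (use q in simp)
    have bnd: "norm (u x n) \<le> C * norm x * q ^ n" for n
    proof -
      have "norm (u x n) = cmod \<mu> ^ n * norm (blinfun_apply (opow ?F n) x)"
        by (simp add: u_def norm_cscale norm_power)
      also have "\<dots> \<le> cmod \<mu> ^ n * (norm (opow ?F n) * norm x)"
        by (intro mult_left_mono norm_blinfun) auto
      also have "\<dots> \<le> cmod \<mu> ^ n * (C * ?M ^ n * norm x)"
        by (intro mult_left_mono mult_right_mono Fn) auto
      also have "\<dots> = C * norm x * q ^ n" by (simp add: q_def power_mult_distrib)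
      finally show ?thesis .
    qed
    have ev: "eventually (\<lambda>n. norm (u x n) \<le> C * norm x * q ^ n) sequentially"
      by (rule always_eventually) (rule allI, rule bnd)
    have "(\<lambda>n. u x n) \<longlonglongrightarrow> 0" by (rule Lim_null_comparison[OF ev lim0])
    from telescope_sums[OF this] have "(\<lambda>n. u x (Suc n) - u x n) sums (0 - u x 0)" .
    moreover have "u x 0 = x" by (simp add: u_def)
    ultimately show ?thesis by simp
  qed
  have commF: "blinfun_apply (opow ?F n) (blinfun_apply ?F x) = blinfun_apply (opow ?F (Suc n)) x" for n x
  proof -
    have e: "opow ?F (Suc n) = opow ?F n o\<^sub>L ?F"
      unfolding opow_Suc by (rule commute_opow) (rule refl)
    show ?thesis unfolding e by (rule blinfun_apply_blinfun_compose[symmetric])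
  qed
  have eq1: "blinfun_apply S (blinfun_apply ?F x - cscale l x) = x" for x
  proof -
    have "blinfun_apply (Z n) (blinfun_apply ?F x - cscale l x) = u x (Suc n) - u x n" for n
    proof -
      have "blinfun_apply (Z n) (blinfun_apply ?F x - cscale l x)
          = cscale (\<mu> ^ Suc n) (blinfun_apply (opow ?F (Suc n)) x)
            - cscale (\<mu> ^ Suc n) (cscale l (blinfun_apply (opow ?F n) x))"
        using BHFn[of n] by (simp add: Z_def blinfun.diff_right commF cscale_diff is_BH_def)
      also have "\<dots> = u x (Suc n) - u x n" by (simp add: u_def cscale_cscale \<mu>l)
      finally show ?thesis .
    qed
    then have "(\<lambda>n. blinfun_apply (Z n) (blinfun_apply ?F x - cscale l x)) sums (- x)"
      using tele[of x] by simp
    then show ?thesis by (simp add: Sapp sums_iff)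
  qed
  have eq2: "blinfun_apply ?F (blinfun_apply S x) - cscale l (blinfun_apply S x) = x" for x
  proof -
    have sm: "summable (\<lambda>n. blinfun_apply (Z n) x)" by (rule apply_summable[OF sZ])
    have s1: "blinfun_apply ?F (\<Sum>n. blinfun_apply (Z n) x) = (\<Sum>n. blinfun_apply ?F (blinfun_apply (Z n) x))"
      by (rule bounded_linear.suminf[OF blinfun.bounded_linear_right sm])
    have s2: "cscale l (\<Sum>n. blinfun_apply (Z n) x) = (\<Sum>n. cscale l (blinfun_apply (Z n) x))"
      by (rule bounded_linear.suminf[OF bl_cscale sm])
    have sm1: "summable (\<lambda>n. blinfun_apply ?F (blinfun_apply (Z n) x))"
      by (rule bounded_linear.summable[OF blinfun.bounded_linear_right sm])
    have sm2: "summable (\<lambda>n. cscale l (blinfun_apply (Z n) x))"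
      by (rule bounded_linear.summable[OF bl_cscale sm])
    have tm: "blinfun_apply ?F (blinfun_apply (Z n) x) - cscale l (blinfun_apply (Z n) x) = u x (Suc n) - u x n" for n
      using BHF by (simp add: Z_def u_def is_BH_def opow_Suc cscale_cscale \<mu>l)
    have "blinfun_apply ?F (blinfun_apply S x) - cscale l (blinfun_apply S x)
        = - ((\<Sum>n. blinfun_apply ?F (blinfun_apply (Z n) x)) - (\<Sum>n. cscale l (blinfun_apply (Z n) x)))"
      by (simp add: Sapp blinfun.minus_right cscale_minus s1 s2)
    also have "\<dots> = - (\<Sum>n. u x (Suc n) - u x n)"
      by (simp add: suminf_diff[OF sm1 sm2] tm)
    also have "\<dots> = x" using tele[of x] by (simp add: sums_iff)
    finally show ?thesis .
  qed
  have "l \<notin> op_spectrum ?F"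
    unfolding op_spectrum_def using BHS eq1 eq2 by blast
  with l show False by contradiction
qed


lemma rho_bound:
  fixes A B :: "'a::complex_hilbert \<Rightarrow>\<^sub>L 'a" and a :: "nat \<Rightarrow> complex"
  assumes conv: "\<And>z. cmod z < R \<Longrightarrow> summable (\<lambda>n. a n * z ^ n)"
    and BH_A: "is_BH A" and BH_B: "is_BH B"
    and comm: "A o\<^sub>L B = B o\<^sub>L A"
    and AB: "norm A * norm B < R"
    and l: "l \<in> op_spectrum (op_series a (A o\<^sub>L B))"
  shows "cmod l \<le> abs_series a (norm A * sqrt (norm (B o\<^sub>L B)))"
proof -
  let ?T = "A o\<^sub>L B"
  define nA where "nA = norm A"
  define nB where "nB = norm B"
  define n2 where "n2 = norm (B o\<^sub>L B)"
  define q where "q = sqrt n2"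
  define \<rho> where "\<rho> = nA * q"
  have nA0: "0 \<le> nA" unfolding nA_def by (rule norm_ge_zero)
  have nB0: "0 \<le> nB" unfolding nB_def by (rule norm_ge_zero)
  have n20: "0 \<le> n2" unfolding n2_def by (rule norm_ge_zero)
  have q0: "0 \<le> q" using n20 by (simp add: q_def)
  have qq: "q ^ 2 = n2" using n20 by (simp add: q_def)
  have n2le: "n2 \<le> nB ^ 2" unfolding n2_def nB_def power2_eq_square by (rule norm_blinfun_compose)
  have qle: "q \<le> nB" unfolding q_def using n2le nB0 by (simp add: real_sqrt_le_iff real_le_lsqrt)
  have \<rho>0: "0 \<le> \<rho>" using nA0 q0 by (simp add: \<rho>_def)
  have \<rho>le: "\<rho> \<le> nA * nB" unfolding \<rho>_def using qle nA0 by (rule mult_left_mono)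
  have \<rho>R: "\<rho> < R" using \<rho>le AB by (simp add: nA_def nB_def)
  have BHT: "is_BH ?T" by (rule is_BH_compose[OF BH_A BH_B])
  have key: "cmod l \<le> abs_series a (\<rho> + e)" if e: "0 < e" "e < R - \<rho>" for e
  proof -
    define r where "r = \<rho> + e"
    have r0: "0 < r" using e \<rho>0 by (simp add: r_def)
    define C where "C = max 1 (nA * nB / r)"
    have C1: "1 \<le> C" by (simp add: C_def)
    have bound: "norm (opow ?T k) \<le> C * r ^ k" for k
    proof -
      define m where "m = k div 2"
      define j where "j = k mod 2"
      have kmj: "k = 2 * m + j" by (simp add: m_def j_def)
      have qm: "(q ^ 2) ^ m = (q ^ m) ^ 2" by (metis power_mult mult.commute)
      have "opow B k = opow (B o\<^sub>L B) m o\<^sub>L opow B j"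
        by (simp add: kmj opow_add opow_double)
      then have nBk: "norm (opow B k) \<le> n2 ^ m * nB ^ j"
        using norm_blinfun_compose[of "opow (B o\<^sub>L B) m" "opow B j"]
          norm_opow[of "B o\<^sub>L B" m] norm_opow[of B j]
        by (simp add: n2_def nB_def) (smt (verit) mult_mono norm_ge_zero zero_le_power)
      have "norm (opow ?T k) \<le> norm (opow A k) * norm (opow B k)"
        unfolding opow_prod[OF comm] by (rule norm_blinfun_compose)
      also have "\<dots> \<le> nA ^ k * (n2 ^ m * nB ^ j)"
        using norm_opow[of A k] nBk by (intro mult_mono) (auto simp: nA_def)
      also have "\<dots> = \<rho> ^ (2 * m) * (nA * nB) ^ j"
        using qm by (simp add: kmj \<rho>_def power_add power_mult_distrib power_mult qq[symmetric] mult_ac)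
      also have "\<dots> \<le> r ^ (2 * m) * (C * r ^ j)"
      proof (rule mult_mono)
        show "\<rho> ^ (2 * m) \<le> r ^ (2 * m)" using \<rho>0 e by (intro power_mono) (auto simp: r_def)
        have "j = 0 \<or> j = 1" by (auto simp: j_def)
        then show "(nA * nB) ^ j \<le> C * r ^ j"
        proof
          assume "j = 0" then show ?thesis using C1 by simp
        next
          assume j1: "j = 1"
          have "nA * nB = (nA * nB / r) * r" using r0 by simp
          also have "\<dots> \<le> C * r" using r0 by (intro mult_right_mono) (auto simp: C_def)
          finally show ?thesis using j1 by simp
        qed
      qed (use r0 C1 nA0 nB0 in auto)
      also have "\<dots> = C * r ^ k" by (simp add: kmj power_add mult_ac)
      finally show ?thesis .
    qed
    show ?thesis unfolding r_def[symmetric]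
      by (rule spec_bound[OF conv BHT _ _ _ bound l]) (use r0 e C1 in \<open>auto simp: r_def\<close>)
  qed
  have cont: "isCont (abs_series a) \<rho>" by (rule fa_isCont[OF conv \<rho>0 \<rho>R])
  have lim: "((\<lambda>e. abs_series a (\<rho> + e)) \<longlongrightarrow> abs_series a \<rho>) (at_right 0)"
  proof -
    have "((\<lambda>e. \<rho> + e) \<longlongrightarrow> \<rho> + 0) (at_right 0)" by (intro tendsto_intros)
    then show ?thesis using isCont_tendsto_compose[OF cont] by simp
  qed
  have ev: "eventually (\<lambda>e. cmod l \<le> abs_series a (\<rho> + e)) (at_right 0)"
    using eventually_at_right_real[of 0 "R - \<rho>"] \<rho>R
    by (auto elim!: eventually_mono intro: key)
  have "cmod l \<le> abs_series a \<rho>" by (rule tendsto_lowerbound[OF lim ev]) simp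
  then show ?thesis by (simp add: \<rho>_def q_def nA_def n2_def)
qed


theorem proposition3p1:
  fixes a :: "nat \<Rightarrow> complex" and R :: real
    and A B :: "'a::complex_hilbert \<Rightarrow>\<^sub>L 'a"
  assumes R_pos: "R > 0"
    and conv: "\<And>z. cmod z < R \<Longrightarrow> summable (\<lambda>n. a n * z ^ n)"
    and BH_A: "is_BH A" and BH_B: "is_BH B"
    and comm: "A o\<^sub>L B = B o\<^sub>L A"
    and nA: "norm A ^ 2 < R" and nB: "norm B ^ 2 < R"
  shows
   "spectral_radius (op_series a (A o\<^sub>L B))
      \<le> 1/2 * abs_series a (norm (A o\<^sub>L B))
        + 1/2 * abs_series a (sqrt (norm A) * sqrt (norm B) * sqrt (norm (A o\<^sub>L B)))
    \<and> 1/2 * abs_series a (norm (A o\<^sub>L B))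
        + 1/2 * abs_series a (sqrt (norm A) * sqrt (norm B) * sqrt (norm (A o\<^sub>L B)))
      \<le> 1/2 * abs_series a (norm (A o\<^sub>L B))
        + 1/2 * sqrt (abs_series a (norm A * norm B)) * sqrt (abs_series a (norm (A o\<^sub>L B)))
    \<and> spectral_radius (op_series a (A o\<^sub>L B))
      \<le> 1/2 * abs_series a (norm (A o\<^sub>L B))
        + 1/2 * min (abs_series a (norm A * sqrt (norm (B o\<^sub>L B))))
                    (abs_series a (sqrt (norm (A o\<^sub>L A)) * norm B))
    \<and> 1/2 * abs_series a (norm (A o\<^sub>L B))
        + 1/2 * min (abs_series a (norm A * sqrt (norm (B o\<^sub>L B))))
                    (abs_series a (sqrt (norm (A o\<^sub>L A)) * norm B))
      \<le> 1/2 * abs_series a (norm (A o\<^sub>L B))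
        + 1/2 * min (sqrt (abs_series a (norm A ^ 2)) * sqrt (abs_series a (norm (B o\<^sub>L B))))
                    (sqrt (abs_series a (norm (A o\<^sub>L A))) * sqrt (abs_series a (norm B ^ 2)))"
proof -
  let ?T = "A o\<^sub>L B" let ?F = "op_series a (A o\<^sub>L B)"
  let ?f = "abs_series a"
  define nA where "nA = norm A"
  define nB where "nB = norm B"
  define nT where "nT = norm ?T"
  define n2A where "n2A = norm (A o\<^sub>L A)"
  define n2B where "n2B = norm (B o\<^sub>L B)"
  have nA0: "0 \<le> nA" unfolding nA_def by (rule norm_ge_zero)
  have nB0: "0 \<le> nB" unfolding nB_def by (rule norm_ge_zero)
  have nT0: "0 \<le> nT" unfolding nT_def by (rule norm_ge_zero)
  have n2A0: "0 \<le> n2A" unfolding n2A_def by (rule norm_ge_zero)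
  have n2B0: "0 \<le> n2B" unfolding n2B_def by (rule norm_ge_zero)
  have nTle: "nT \<le> nA * nB" unfolding nT_def nA_def nB_def by (rule norm_blinfun_compose)
  have n2Ale: "n2A \<le> nA ^ 2" unfolding n2A_def nA_def power2_eq_square by (rule norm_blinfun_compose)
  have n2Ble: "n2B \<le> nB ^ 2" unfolding n2B_def nB_def power2_eq_square by (rule norm_blinfun_compose)
  have nA2R: "nA ^ 2 < R" using nA by (simp add: nA_def)
  have nB2R: "nB ^ 2 < R" using nB by (simp add: nB_def)
  have ABR: "nA * nB < R"
  proof -
    have "2 * (nA * nB) \<le> nA ^ 2 + nB ^ 2" using sum_squares_bound[of nA nB] by (simp add: power2_eq_square)
    then show ?thesis using nA2R nB2R by linarith
  qed
  have TR: "nT < R" using nTle ABR by linarith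
  have n2AR: "n2A < R" using n2Ale nA2R by linarith
  have n2BR: "n2B < R" using n2Ble nB2R by linarith
  have ABR': "norm A * norm B < R" using ABR unfolding nA_def nB_def .
  have BHT: "is_BH ?T" by (rule is_BH_compose[OF BH_A BH_B])
  have b1: "cmod l \<le> ?f nT" if l: "l \<in> op_spectrum ?F" for l
    unfolding nT_def
    by (rule spec_bound[where s="norm ?T" and C=1, OF conv BHT _ _ _ _ l])
       (use TR nT0 in \<open>auto simp: nT_def norm_opow\<close>)
  have b2: "cmod l \<le> ?f (nA * sqrt n2B)" if l: "l \<in> op_spectrum ?F" for l
    unfolding nA_def n2B_def
    by (rule rho_bound[where R=R, OF conv BH_A BH_B comm _ l]) (use ABR' in auto)
  have b3: "cmod l \<le> ?f (sqrt n2A * nB)" if l: "l \<in> op_spectrum ?F" for l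
  proof -
    have l': "l \<in> op_spectrum (op_series a (B o\<^sub>L A))" using l comm by simp
    have "cmod l \<le> ?f (nB * sqrt n2A)"
      unfolding nB_def n2A_def
      by (rule rho_bound[where R=R, OF conv BH_B BH_A comm[symmetric] _ l']) (use ABR' in \<open>auto simp: mult.commute\<close>)
    then show ?thesis by (simp add: mult.commute)
  qed
  have sr: "spectral_radius ?F \<le> X" if "0 \<le> X" "\<And>l. l \<in> op_spectrum ?F \<Longrightarrow> cmod l \<le> X" for X
    unfolding spectral_radius_def using that by (auto intro!: cSup_least)
  have f0: "0 \<le> ?f t" if "0 \<le> t" "t < R" for t by (rule fa_nonneg[OF conv that])
  define g where "g = sqrt nA * sqrt nB * sqrt nT"
  have g_eq: "g = sqrt ((nA * nB) * nT)" by (simp add: g_def real_sqrt_mult)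
  have g0: "0 \<le> g" using nA0 nB0 nT0 by (simp add: g_def)
  have Tg: "nT \<le> g"
  proof -
    have "nT * nT \<le> (nA * nB) * nT" using nTle nT0 by (rule mult_right_mono)
    then have "sqrt (nT * nT) \<le> g" unfolding g_eq by (rule real_sqrt_le_mono)
    then show ?thesis using nT0 by simp
  qed
  have gR: "g < R"
  proof -
    have "(nA * nB) * nT \<le> (nA * nB) * (nA * nB)" using nTle nA0 nB0 by (intro mult_left_mono) auto
    then have "g \<le> sqrt ((nA * nB) * (nA * nB))" unfolding g_eq by (rule real_sqrt_le_mono)
    also have "\<dots> = nA * nB" using nA0 nB0 by simp
    finally show ?thesis using ABR by linarith
  qed
  define r1 where "r1 = nA * sqrt n2B"
  define r2 where "r2 = sqrt n2A * nB"
  have r1_eq: "r1 = sqrt (nA ^ 2 * n2B)" using nA0 by (simp add: r1_def real_sqrt_mult)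
  have r2_eq: "r2 = sqrt (n2A * nB ^ 2)" using nB0 by (simp add: r2_def real_sqrt_mult)
  have r10: "0 \<le> r1" using nA0 n2B0 by (simp add: r1_def)
  have r20: "0 \<le> r2" using nB0 n2A0 by (simp add: r2_def)
  have r1R: "r1 < R"
  proof -
    have "sqrt n2B \<le> nB" using n2Ble nB0 by (simp add: real_sqrt_le_iff real_le_lsqrt)
    then have "r1 \<le> nA * nB" unfolding r1_def using nA0 by (rule mult_left_mono)
    then show ?thesis using ABR by linarith
  qed
  have r2R: "r2 < R"
  proof -
    have "sqrt n2A \<le> nA" using n2Ale nA0 by (simp add: real_sqrt_le_iff real_le_lsqrt)
    then have "r2 \<le> nA * nB" unfolding r2_def using nB0 by (rule mult_right_mono)
    then show ?thesis using ABR by linarith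
  qed
  have P1: "spectral_radius ?F \<le> 1/2 * ?f nT + 1/2 * ?f g"
  proof (rule sr)
    show "0 \<le> 1/2 * ?f nT + 1/2 * ?f g" using f0[OF nT0 TR] f0[OF g0 gR] by simp
    fix l assume l: "l \<in> op_spectrum ?F"
    have "?f nT \<le> ?f g" by (rule fa_mono[OF conv nT0 Tg gR])
    then show "cmod l \<le> 1/2 * ?f nT + 1/2 * ?f g" using b1[OF l] by simp
  qed
  have P2: "?f g \<le> sqrt (?f (nA * nB)) * sqrt (?f nT)"
    unfolding g_eq by (rule fa_CS[OF conv]) (use nA0 nB0 nT0 ABR TR in auto)
  have P3: "spectral_radius ?F \<le> 1/2 * ?f nT + 1/2 * min (?f r1) (?f r2)"
  proof (rule sr)
    show "0 \<le> 1/2 * ?f nT + 1/2 * min (?f r1) (?f r2)"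
      using f0[OF nT0 TR] f0[OF r10 r1R] f0[OF r20 r2R] by simp
    fix l assume l: "l \<in> op_spectrum ?F"
    show "cmod l \<le> 1/2 * ?f nT + 1/2 * min (?f r1) (?f r2)"
      using b1[OF l] b2[OF l] b3[OF l] by (simp add: r1_def r2_def)
  qed
  have P4a: "?f r1 \<le> sqrt (?f (nA ^ 2)) * sqrt (?f n2B)"
    unfolding r1_eq by (rule fa_CS[OF conv]) (use nA2R n2B0 n2BR in auto)
  have P4b: "?f r2 \<le> sqrt (?f n2A) * sqrt (?f (nB ^ 2))"
    unfolding r2_eq by (rule fa_CS[OF conv]) (use nB2R n2A0 n2AR in auto)
  have P4: "min (?f r1) (?f r2) \<le> min (sqrt (?f (nA ^ 2)) * sqrt (?f n2B)) (sqrt (?f n2A) * sqrt (?f (nB ^ 2)))"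
    using P4a P4b by (rule min.mono)
  show ?thesis
    using P1 P2 P3 P4
    unfolding g_def r1_def r2_def nA_def nB_def nT_def n2A_def n2B_def
    by (simp add: real_sqrt_mult)
qed

end
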